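(* In the model described in the context, the order process $q_t$ has variance not depending on $t$, and the bullwhip measure satisfies $$ BM=\frac{\operatorname{Var} q_t}{\operatorname{Var} D_t} =\frac{2\sigma_L^2}{n^2m^2}\left(m(1-\rho^n)+\frac{n(1+\rho)}{1-\rho}-\frac{(1+\rho^2)(1-\rho^n)}{(1-\rho)^2}\right)+\frac{2\sigma_L^2\mu_D^2}{\sigma_D^2 m^2}+\left(\frac{2\mu_L^2}{n^2}+\frac{2\mu_L}{n}\right)(1-\rho^n)+1 . $$
   Context: Model. Fix $\mu_D\in\mathbb{R}$, $\rho\in(-1,1)$, and an i.i.d. sequence $(\epsilon_t)_{t\in\mathbb{Z}}$ with $E\epsilon_t=0$, $\operatorname{Var}\epsilon_t=\sigma^2\in(0,\infty)$. The demand $(D_t)_{t\in\mathbb{Z}}$ is the stationary AR(1) process $D_t=\mu_D+\rho(D_{t-1}-\mu_D)+\epsilon_t$; thus $E D_t=\mu_D$ and $\sigma_D^2:=\operatorname{Var}D_t=\sigma^2/(1-\rho^2)$. Fix an integer $L^+\ge 0$. The lead times $(L_t)_{t\in\mathbb{Z}}$ are i.i.d. random variables with values in $\{0,1,\dots,L^+\}$, mean $\mu_L$ and variance $\sigma_L^2$, and the sequence $(L_t)$ is independent of $(\epsilon_t)$ (hence of $(D_t)$). Fix integers $n,m\ge 1$. Forecasts: $\widehat{D}_t=\frac1n\sum_{i=1}^n D_{t-i}$, $\widehat{L}_t=\frac1m\sum_{i=1}^m L_{t-i-L^+}$, and the lead-time-demand forecast $\widehat{D^L_t}=\widehat{L}_t\widehat{D}_t$.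 The order-up-to level is $S_t=\widehat{D^L_t}+\mathit{TNS}$ with $\mathit{TNS}$ a constant not depending on $t$, and the order placed in period $t$ is $q_t=S_t-S_{t-1}+D_{t-1}$, i.e. $q_t=\widehat{L}_t\widehat{D}_t-\widehat{L}_{t-1}\widehat{D}_{t-1}+D_{t-1}$. The bullwhip measure is $BM=\operatorname{Var}q_t/\operatorname{Var}D_t$. *)

theory Defs
  imports "HOL-Probability.Probability"
begin

definition D_hat :: "nat \<Rightarrow> (int \<Rightarrow> 'a \<Rightarrow> real) \<Rightarrow> int \<Rightarrow> 'a \<Rightarrow> real" where
  "D_hat n D t \<omega> = (1 / real n) * (\<Sum>i\<in>{1..n}. D (t - int i) \<omega>)"

definition L_hat :: "nat \<Rightarrow> nat \<Rightarrow> (int \<Rightarrow> 'a \<Rightarrow> nat) \<Rightarrow> int \<Rightarrow> 'a \<Rightarrow> real" where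
  "L_hat m Lplus L t \<omega> = (1 / real m) * (\<Sum>i\<in>{1..m}. real (L (t - int i - int Lplus) \<omega>))"

definition order_up_to ::
  "nat \<Rightarrow> nat \<Rightarrow> nat \<Rightarrow> real \<Rightarrow> (int \<Rightarrow> 'a \<Rightarrow> real) \<Rightarrow> (int \<Rightarrow> 'a \<Rightarrow> nat) \<Rightarrow> int \<Rightarrow> 'a \<Rightarrow> real" where
  "order_up_to n m Lplus TNS D L t \<omega> = L_hat m Lplus L t \<omega> * D_hat n D t \<omega> + TNS"

definition order_qty ::
  "nat \<Rightarrow> nat \<Rightarrow> nat \<Rightarrow> real \<Rightarrow> (int \<Rightarrow> 'a \<Rightarrow> real) \<Rightarrow> (int \<Rightarrow> 'a \<Rightarrow> nat) \<Rightarrow> int \<Rightarrow> 'a \<Rightarrow> real" where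
  "order_qty n m Lplus TNS D L t \<omega> =
     order_up_to n m Lplus TNS D L t \<omega> - order_up_to n m Lplus TNS D L (t - 1) \<omega> + D (t - 1) \<omega>"

definition (in prob_space) stationary_AR1 ::
  "real \<Rightarrow> real \<Rightarrow> (int \<Rightarrow> 'a \<Rightarrow> real) \<Rightarrow> (int \<Rightarrow> 'a \<Rightarrow> real) \<Rightarrow> bool" where
  "stationary_AR1 muD rho eps D \<longleftrightarrow>
     (\<forall>t. D t \<in> borel_measurable M) \<and>
     (\<forall>t. integrable M (\<lambda>\<omega>. (D t \<omega>)\<^sup>2)) \<and>
     (\<forall>t. \<forall>\<omega>\<in>space M. D t \<omega> = muD + rho * (D (t - 1) \<omega> - muD) + eps t \<omega>) \<and>
     (\<forall>t. expectation (D t) = expectation (D 0)) \<and>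
     (\<forall>t h. expectation (\<lambda>\<omega>. D (t + h) \<omega> * D t \<omega>) = expectation (\<lambda>\<omega>. D h \<omega> * D 0 \<omega>))"

end

theory Submission
  imports Defs
begin


lemma alg1: fixes r p v k :: real assumes "r \<noteq> 1"
  shows "v * (k * (1 + r) / (1 - r) - 2 * r * (1 - p) / (1 - r)\<^sup>2) + 2 * (v * (r * (1 - p) / (1 - r))) + v
    = v * ((k + 1) * (1 + r) / (1 - r) - 2 * r * (1 - r * p) / (1 - r)\<^sup>2)"
proof -
  define q where "q = 1 - r"
  have d: "q \<noteq> 0" using assms by (simp add: q_def)
  have r: "r = 1 - q" by (simp add: q_def)
  show ?thesis unfolding r using d by (simp add: field_simps) (simp add: algebra_simps eval_nat_numeral)
qed

locale bw = prob_space +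
  fixes eps D :: "int \<Rightarrow> 'a \<Rightarrow> real"
    and L :: "int \<Rightarrow> 'a \<Rightarrow> nat"
    and muD rho sigma2 muL sigmaL2 :: real
    and Lplus n m :: nat
  assumes rho: "-1 < rho" "rho < 1"
    and eps_rv[measurable]: "\<And>t. eps t \<in> borel_measurable M"
    and eps_L2: "\<And>t. integrable M (\<lambda>\<omega>. (eps t \<omega>)\<^sup>2)"
    and eps_mean: "\<And>t. expectation (eps t) = 0"
    and eps_var: "\<And>t. variance (eps t) = sigma2"
    and sigma2_pos: "0 < sigma2"
    and L_rv[measurable]: "\<And>t. L t \<in> measurable M (count_space UNIV)"
    and L_range: "\<And>t \<omega>. \<omega> \<in> space M \<Longrightarrow> L t \<omega> \<le> Lplus"
    and L_id: "\<And>t. distr M (count_space UNIV) (L t) = distr M (count_space UNIV) (L 0)"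
    and L_mean: "expectation (\<lambda>\<omega>. real (L 0 \<omega>)) = muL"
    and L_var: "variance (\<lambda>\<omega>. real (L 0 \<omega>)) = sigmaL2"
    and indep: "indep_vars (\<lambda>_. borel)
                  (\<lambda>i \<omega>. case i of Inl t \<Rightarrow> eps t \<omega> | Inr t \<Rightarrow> real (L t \<omega>)) UNIV"
    and indep_LD: "indep_set
          (sigma_sets (space M) (\<Union>t. {(\<lambda>\<omega>. real (L t \<omega>)) -` A \<inter> space M | A. A \<in> sets borel}))
          (sigma_sets (space M) ((\<Union>t. {eps t -` A \<inter> space M | A. A \<in> sets borel})
                                  \<union> (\<Union>t. {D t -` A \<inter> space M | A. A \<in> sets borel})))"
    and AR1: "stationary_AR1 muD rho eps D"
    and n: "n \<ge> 1" and m: "m \<ge> 1"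
begin

lemma D_rv[measurable]: "D t \<in> borel_measurable M"
  using AR1 unfolding stationary_AR1_def by blast
lemma D_L2: "integrable M (\<lambda>\<omega>. (D t \<omega>)\<^sup>2)"
  using AR1 unfolding stationary_AR1_def by blast
lemma D_rec: "\<omega> \<in> space M \<Longrightarrow> D t \<omega> = muD + rho * (D (t - 1) \<omega> - muD) + eps t \<omega>"
  using AR1 unfolding stationary_AR1_def by blast
lemma D_mean_const: "expectation (D t) = expectation (D 0)"
  using AR1 unfolding stationary_AR1_def by blast
lemma D_sq_const: "expectation (\<lambda>\<omega>. D t \<omega> * D t \<omega>) = expectation (\<lambda>\<omega>. D 0 \<omega> * D 0 \<omega>)"
proof -
  have "\<forall>t h. expectation (\<lambda>\<omega>. D (t + h) \<omega> * D t \<omega>) = expectation (\<lambda>\<omega>. D h \<omega> * D 0 \<omega>)"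
    using AR1 unfolding stationary_AR1_def by blast
  from this[rule_format, of t 0] show ?thesis by simp
qed

lemma D_int: "integrable M (D t)"
  by (rule square_integrable_imp_integrable[OF _ D_L2]) simp
lemma eps_int: "integrable M (eps t)"
  by (rule square_integrable_imp_integrable[OF _ eps_L2]) simp

definition "SigL = sigma (space M) (\<Union>t. {(\<lambda>\<omega>. real (L t \<omega>)) -` A \<inter> space M | A. A \<in> sets borel})"
definition "SigD = sigma (space M) ((\<Union>t. {eps t -` A \<inter> space M | A. A \<in> sets borel})
                                  \<union> (\<Union>t. {D t -` A \<inter> space M | A. A \<in> sets borel}))"

lemma space_SigL: "space SigL = space M" unfolding SigL_def by (rule space_measure_of) auto
lemma sets_SigL: "sets SigL = sigma_sets (space M) (\<Union>t. {(\<lambda>\<omega>. real (L t \<omega>)) -` A \<inter> space M | A. A \<in> sets borel})"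
  unfolding SigL_def by (rule sets_measure_of) auto
lemma space_SigD: "space SigD = space M" unfolding SigD_def by (rule space_measure_of) auto
lemma sets_SigD: "sets SigD = sigma_sets (space M) ((\<Union>t. {eps t -` A \<inter> space M | A. A \<in> sets borel})
                                  \<union> (\<Union>t. {D t -` A \<inter> space M | A. A \<in> sets borel}))"
  unfolding SigD_def by (rule sets_measure_of) auto

lemma L_SigL[measurable]: "(\<lambda>\<omega>. real (L t \<omega>)) \<in> borel_measurable SigL"
  by (rule measurableI) (auto simp: space_SigL sets_SigL)
lemma D_SigD[measurable]: "D t \<in> borel_measurable SigD"
  by (rule measurableI) (auto simp: space_SigD sets_SigD)
lemma eps_SigD[measurable]: "eps t \<in> borel_measurable SigD"
  by (rule measurableI) (auto simp: space_SigD sets_SigD)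

lemma factor:
  fixes X Y :: "'a \<Rightarrow> real"
  assumes X: "X \<in> borel_measurable SigL" and Y: "Y \<in> borel_measurable SigD"
    and iX: "integrable M X" and iY: "integrable M Y"
  shows "integrable M (\<lambda>\<omega>. X \<omega> * Y \<omega>)"
    "expectation (\<lambda>\<omega>. X \<omega> * Y \<omega>) = expectation X * expectation Y"
proof -
  have iv: "indep_var borel X borel Y"
    unfolding indep_var_eq
  proof (intro conjI)
    show "random_variable borel X" using iX by auto
    show "random_variable borel Y" using iY by auto
    have s1: "sigma_sets (space M) {X -` A \<inter> space M |A. A \<in> sets borel} \<subseteq> sets SigL"
      unfolding sets_SigL apply (rule sigma_sets_mono) using measurable_sets[OF X] unfolding space_SigL sets_SigL by auto
    have s2: "sigma_sets (space M) {Y -` A \<inter> space M |A. A \<in> sets borel} \<subseteq> sets SigD"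
      unfolding sets_SigD apply (rule sigma_sets_mono) using measurable_sets[OF Y] unfolding space_SigD sets_SigD by auto
    show "indep_set (sigma_sets (space M) {X -` A \<inter> space M |A. A \<in> sets borel})
        (sigma_sets (space M) {Y -` A \<inter> space M |A. A \<in> sets borel})"
      unfolding indep_set_def
      apply (rule indep_sets_mono_sets[OF indep_LD[unfolded indep_set_def]])
      subgoal for i using s1 s2 unfolding sets_SigL sets_SigD by (cases i) simp_all
      done
  qed
  show "integrable M (\<lambda>\<omega>. X \<omega> * Y \<omega>)" by (rule indep_var_integrable[OF iv iX iY])
  show "expectation (\<lambda>\<omega>. X \<omega> * Y \<omega>) = expectation X * expectation Y"
    using indep_var_lebesgue_integral[OF iv iX iY] by simp
qed


lemma L_real[measurable]: "(\<lambda>\<omega>. real (L t \<omega>)) \<in> borel_measurable M"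
  by (rule measurable_compose[OF L_rv]) simp

lemma SigL_sub: "sets SigL \<subseteq> sets M"
  unfolding sets_SigL by (rule sigma_algebra.sigma_sets_subset[OF sets.sigma_algebra_axioms])
      (auto intro: measurable_sets[OF L_real])

lemma SigD_sub: "sets SigD \<subseteq> sets M"
  unfolding sets_SigD by (rule sigma_algebra.sigma_sets_subset[OF sets.sigma_algebra_axioms]) auto

lemma SigL_M: assumes f: "f \<in> borel_measurable SigL" shows "f \<in> borel_measurable M"
proof (rule measurableI)
  fix A :: "'b set" assume "A \<in> sets borel"
  from measurable_sets[OF f this] show "f -` A \<inter> space M \<in> sets M" using SigL_sub space_SigL by auto
qed simp

lemma SigD_M: assumes f: "f \<in> borel_measurable SigD" shows "f \<in> borel_measurable M"
proof (rule measurableI)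
  fix A :: "'b set" assume "A \<in> sets borel"
  from measurable_sets[OF f this] show "f -` A \<inter> space M \<in> sets M" using SigD_sub space_SigD by auto
qed simp

definition "Lfun (X::'a\<Rightarrow>real) \<longleftrightarrow> X \<in> borel_measurable SigL \<and> (\<exists>B. \<forall>\<omega>\<in>space M. \<bar>X \<omega>\<bar> \<le> B)"
definition "Dfun (Y::'a\<Rightarrow>real) \<longleftrightarrow> Y \<in> borel_measurable SigD \<and> integrable M (\<lambda>\<omega>. (Y \<omega>)\<^sup>2)"

lemma L2_prod:
  fixes Y Z :: "'a \<Rightarrow> real"
  assumes [measurable]: "Y \<in> borel_measurable M" "Z \<in> borel_measurable M"
    and "integrable M (\<lambda>\<omega>. (Y \<omega>)\<^sup>2)" "integrable M (\<lambda>\<omega>. (Z \<omega>)\<^sup>2)"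
  shows "integrable M (\<lambda>\<omega>. Y \<omega> * Z \<omega>)"
proof (rule Bochner_Integration.integrable_bound[where f="\<lambda>\<omega>. (Y \<omega>)\<^sup>2 + (Z \<omega>)\<^sup>2"])
  show "integrable M (\<lambda>\<omega>. (Y \<omega>)\<^sup>2 + (Z \<omega>)\<^sup>2)" using assms by auto
  show "AE x in M. norm (Y x * Z x) \<le> norm ((Y x)\<^sup>2 + (Z x)\<^sup>2)"
  proof (rule AE_I2)
    fix x
    have "0 \<le> (\<bar>Y x\<bar> - \<bar>Z x\<bar>)\<^sup>2" by simp
    then have "2 * (\<bar>Y x\<bar> * \<bar>Z x\<bar>) \<le> (Y x)\<^sup>2 + (Z x)\<^sup>2"
      unfolding power2_diff power2_abs by simp
    moreover have "0 \<le> \<bar>Y x\<bar> * \<bar>Z x\<bar>" by simp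
    ultimately have "\<bar>Y x * Z x\<bar> \<le> (Y x)\<^sup>2 + (Z x)\<^sup>2"
      unfolding abs_mult by linarith
    then show "norm (Y x * Z x) \<le> norm ((Y x)\<^sup>2 + (Z x)\<^sup>2)" by simp
  qed
qed simp

lemma Lfun_int: "Lfun X \<Longrightarrow> integrable M X"
  unfolding Lfun_def
proof (elim conjE exE)
  fix B assume a: "X \<in> borel_measurable SigL" "\<forall>\<omega>\<in>space M. \<bar>X \<omega>\<bar> \<le> B"
  show "integrable M X"
    by (rule integrable_const_bound[where B=B]) (use a SigL_M in auto)
qed

lemma Dfun_meas: "Dfun Y \<Longrightarrow> Y \<in> borel_measurable M"
  unfolding Dfun_def using SigD_M by auto

lemma Dfun_int2: "Dfun Y \<Longrightarrow> Dfun Z \<Longrightarrow> integrable M (\<lambda>\<omega>. Y \<omega> * Z \<omega>)"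
  using L2_prod Dfun_meas unfolding Dfun_def by blast

lemma Dfun_int: "Dfun Y \<Longrightarrow> integrable M Y"
  using Dfun_int2[of Y "\<lambda>_. 1"] unfolding Dfun_def by simp

lemma Lfun_mult: "Lfun X \<Longrightarrow> Lfun Z \<Longrightarrow> Lfun (\<lambda>\<omega>. X \<omega> * Z \<omega>)"
  unfolding Lfun_def
proof (elim conjE exE, intro conjI)
  fix B C assume "X \<in> borel_measurable SigL" "Z \<in> borel_measurable SigL" and B: "\<forall>\<omega>\<in>space M. \<bar>X \<omega>\<bar> \<le> B"
    and C: "\<forall>\<omega>\<in>space M. \<bar>Z \<omega>\<bar> \<le> C"
  then show "(\<lambda>\<omega>. X \<omega> * Z \<omega>) \<in> borel_measurable SigL" by (intro borel_measurable_times)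
  show "\<exists>B. \<forall>\<omega>\<in>space M. \<bar>X \<omega> * Z \<omega>\<bar> \<le> B"
    using B C by (intro exI[of _ "B*C"]) (auto simp: abs_mult intro!: mult_mono)
qed

lemma Lfun_add: "Lfun X \<Longrightarrow> Lfun Z \<Longrightarrow> Lfun (\<lambda>\<omega>. X \<omega> + Z \<omega>)"
  unfolding Lfun_def
proof (elim conjE exE, intro conjI)
  fix B C assume "X \<in> borel_measurable SigL" "Z \<in> borel_measurable SigL" and B: "\<forall>\<omega>\<in>space M. \<bar>X \<omega>\<bar> \<le> B"
    and C: "\<forall>\<omega>\<in>space M. \<bar>Z \<omega>\<bar> \<le> C"
  then show "(\<lambda>\<omega>. X \<omega> + Z \<omega>) \<in> borel_measurable SigL" by (intro borel_measurable_add)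
  show "\<exists>B. \<forall>\<omega>\<in>space M. \<bar>X \<omega> + Z \<omega>\<bar> \<le> B"
    using B C by (intro exI[of _ "B+C"]) (auto intro!: order.trans[OF abs_triangle_ineq] add_mono)
qed

lemma Lfun_const: "Lfun (\<lambda>_. c)"
  unfolding Lfun_def by (auto intro!: exI[of _ "\<bar>c\<bar>"])

lemma Lfun_L: "Lfun (\<lambda>\<omega>. real (L t \<omega>))"
  unfolding Lfun_def using L_range by (auto intro!: exI[of _ "real Lplus"])

lemma Lfun_sum: "finite I \<Longrightarrow> (\<And>i. i \<in> I \<Longrightarrow> Lfun (X i)) \<Longrightarrow> Lfun (\<lambda>\<omega>. \<Sum>i\<in>I. X i \<omega>)"
  by (induction I rule: finite_induct) (auto intro: Lfun_const Lfun_add)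

lemma Dfun_add: "Dfun Y \<Longrightarrow> Dfun Z \<Longrightarrow> Dfun (\<lambda>\<omega>. Y \<omega> + Z \<omega>)"
proof -
  assume a: "Dfun Y" "Dfun Z"
  then have "integrable M (\<lambda>\<omega>. (Y \<omega>)\<^sup>2 + (Z \<omega>)\<^sup>2 + 2 * (Y \<omega> * Z \<omega>))"
    using Dfun_int2[OF a] unfolding Dfun_def by auto
  then show ?thesis using a unfolding Dfun_def power2_sum by (auto simp: mult.assoc intro: borel_measurable_add)
qed

lemma Dfun_mult: "Dfun Y \<Longrightarrow> Dfun (\<lambda>\<omega>. c * Y \<omega>)"
  unfolding Dfun_def by (auto simp: power_mult_distrib intro: borel_measurable_times)

lemma Dfun_const: "Dfun (\<lambda>_. c)"
  unfolding Dfun_def by auto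

lemma Dfun_D: "Dfun (D t)"
  unfolding Dfun_def using D_L2 by auto

lemma Dfun_eps: "Dfun (eps t)"
  unfolding Dfun_def using eps_L2 by auto

lemma Dfun_sum: "finite I \<Longrightarrow> (\<And>i. i \<in> I \<Longrightarrow> Dfun (X i)) \<Longrightarrow> Dfun (\<lambda>\<omega>. \<Sum>i\<in>I. X i \<omega>)"
  by (induction I rule: finite_induct) (auto intro: Dfun_const Dfun_add)

lemma prodfac:
  assumes "Lfun X" "Lfun X'" "Dfun Y" "Dfun Y'"
  shows "integrable M (\<lambda>\<omega>. (X \<omega> * X' \<omega>) * (Y \<omega> * Y' \<omega>))"
    "expectation (\<lambda>\<omega>. (X \<omega> * X' \<omega>) * (Y \<omega> * Y' \<omega>))
      = expectation (\<lambda>\<omega>. X \<omega> * X' \<omega>) * expectation (\<lambda>\<omega>. Y \<omega> * Y' \<omega>)"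
proof -
  have l: "Lfun (\<lambda>\<omega>. X \<omega> * X' \<omega>)" using assms Lfun_mult by auto
  have m1: "(\<lambda>\<omega>. X \<omega> * X' \<omega>) \<in> borel_measurable SigL" using l unfolding Lfun_def by auto
  have m2: "(\<lambda>\<omega>. Y \<omega> * Y' \<omega>) \<in> borel_measurable SigD" using assms unfolding Dfun_def by auto
  note f = factor[OF m1 m2 Lfun_int[OF l] Dfun_int2[OF assms(3,4)]]
  show "integrable M (\<lambda>\<omega>. (X \<omega> * X' \<omega>) * (Y \<omega> * Y' \<omega>))" using f(1) .
  show "expectation (\<lambda>\<omega>. (X \<omega> * X' \<omega>) * (Y \<omega> * Y' \<omega>))
      = expectation (\<lambda>\<omega>. X \<omega> * X' \<omega>) * expectation (\<lambda>\<omega>. Y \<omega> * Y' \<omega>)" using f(2) .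
qed

lemma meanfac:
  assumes "Lfun X" "Dfun Y"
  shows "integrable M (\<lambda>\<omega>. X \<omega> * Y \<omega>)"
    "expectation (\<lambda>\<omega>. X \<omega> * Y \<omega>) = expectation X * expectation Y"
proof -
  have m1: "X \<in> borel_measurable SigL" using assms(1) unfolding Lfun_def by blast
  have m2: "Y \<in> borel_measurable SigD" using assms(2) unfolding Dfun_def by blast
  note f = factor[OF m1 m2 Lfun_int[OF assms(1)] Dfun_int[OF assms(2)]]
  show "integrable M (\<lambda>\<omega>. X \<omega> * Y \<omega>)" by (rule f(1))
  show "expectation (\<lambda>\<omega>. X \<omega> * Y \<omega>) = expectation X * expectation Y" by (rule f(2))
qed

lemma sq_expand:
  assumes K: "finite K" and XY: "\<And>k. k \<in> K \<Longrightarrow> Lfun (X k) \<and> Dfun (Y k)"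
  shows "integrable M (\<lambda>\<omega>. (\<Sum>k\<in>K. X k \<omega> * Y k \<omega>)\<^sup>2)"
    "expectation (\<lambda>\<omega>. (\<Sum>k\<in>K. X k \<omega> * Y k \<omega>)\<^sup>2)
      = (\<Sum>k\<in>K. \<Sum>l\<in>K. expectation (\<lambda>\<omega>. X k \<omega> * X l \<omega>) * expectation (\<lambda>\<omega>. Y k \<omega> * Y l \<omega>))"
proof -
  have eq: "(\<lambda>\<omega>. (\<Sum>k\<in>K. X k \<omega> * Y k \<omega>)\<^sup>2)
     = (\<lambda>\<omega>. \<Sum>k\<in>K. \<Sum>l\<in>K. (X k \<omega> * X l \<omega>) * (Y k \<omega> * Y l \<omega>))"
    by (auto simp: power2_eq_square sum_product intro!: sum.cong)
  have i: "\<And>k l. k \<in> K \<Longrightarrow> l \<in> K \<Longrightarrow> integrable M (\<lambda>\<omega>. (X k \<omega> * X l \<omega>) * (Y k \<omega> * Y l \<omega>))"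
    using XY by (intro prodfac(1)) auto
  have i2: "\<And>k. k \<in> K \<Longrightarrow> integrable M (\<lambda>\<omega>. \<Sum>l\<in>K. (X k \<omega> * X l \<omega>) * (Y k \<omega> * Y l \<omega>))"
    using i by (intro Bochner_Integration.integrable_sum) auto
  show "integrable M (\<lambda>\<omega>. (\<Sum>k\<in>K. X k \<omega> * Y k \<omega>)\<^sup>2)"
    unfolding eq by (rule Bochner_Integration.integrable_sum) (rule i2)
  have "expectation (\<lambda>\<omega>. (\<Sum>k\<in>K. X k \<omega> * Y k \<omega>)\<^sup>2)
     = (\<Sum>k\<in>K. expectation (\<lambda>\<omega>. \<Sum>l\<in>K. (X k \<omega> * X l \<omega>) * (Y k \<omega> * Y l \<omega>)))"
    unfolding eq by (rule Bochner_Integration.integral_sum) (rule i2)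
  also have "\<dots> = (\<Sum>k\<in>K. \<Sum>l\<in>K. expectation (\<lambda>\<omega>. (X k \<omega> * X l \<omega>) * (Y k \<omega> * Y l \<omega>)))"
    by (intro sum.cong refl Bochner_Integration.integral_sum i)
  also have "\<dots> = (\<Sum>k\<in>K. \<Sum>l\<in>K. expectation (\<lambda>\<omega>. X k \<omega> * X l \<omega>) * expectation (\<lambda>\<omega>. Y k \<omega> * Y l \<omega>))"
    using XY by (intro sum.cong refl prodfac(2)) auto
  finally show "expectation (\<lambda>\<omega>. (\<Sum>k\<in>K. X k \<omega> * Y k \<omega>)\<^sup>2)
      = (\<Sum>k\<in>K. \<Sum>l\<in>K. expectation (\<lambda>\<omega>. X k \<omega> * X l \<omega>) * expectation (\<lambda>\<omega>. Y k \<omega> * Y l \<omega>))" .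
qed

lemma mean_expand:
  assumes K: "finite K" and XY: "\<And>k. k \<in> K \<Longrightarrow> Lfun (X k) \<and> Dfun (Y k)"
  shows "integrable M (\<lambda>\<omega>. \<Sum>k\<in>K. X k \<omega> * Y k \<omega>)"
    "expectation (\<lambda>\<omega>. \<Sum>k\<in>K. X k \<omega> * Y k \<omega>) = (\<Sum>k\<in>K. expectation (X k) * expectation (Y k))"
proof -
  have i: "\<And>k. k \<in> K \<Longrightarrow> integrable M (\<lambda>\<omega>. X k \<omega> * Y k \<omega>)"
    using XY by (intro meanfac(1)) auto
  show "integrable M (\<lambda>\<omega>. \<Sum>k\<in>K. X k \<omega> * Y k \<omega>)" using i by (intro Bochner_Integration.integrable_sum) auto
  have "expectation (\<lambda>\<omega>. \<Sum>k\<in>K. X k \<omega> * Y k \<omega>) = (\<Sum>k\<in>K. expectation (\<lambda>\<omega>. X k \<omega> * Y k \<omega>))"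
    by (rule Bochner_Integration.integral_sum) (rule i)
  also have "\<dots> = (\<Sum>k\<in>K. expectation (X k) * expectation (Y k))"
    using XY by (intro sum.cong refl meanfac(2)) auto
  finally show "expectation (\<lambda>\<omega>. \<Sum>k\<in>K. X k \<omega> * Y k \<omega>) = (\<Sum>k\<in>K. expectation (X k) * expectation (Y k))" .
qed


lemma D_mean: "expectation (D t) = muD"
proof -
  have "expectation (D t) = expectation (\<lambda>\<omega>. muD + rho * (D (t-1) \<omega> - muD) + eps t \<omega>)"
    by (rule Bochner_Integration.integral_cong[OF refl]) (rule D_rec)
  also have "\<dots> = muD + rho * (expectation (D (t-1)) - muD) + expectation (eps t)"
    using D_int eps_int by (simp add: prob_space)
  finally have "expectation (D 0) = muD + rho * (expectation (D 0) - muD)"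
    using D_mean_const[of t] D_mean_const[of "t-1"] eps_mean by simp
  then have "(1 - rho) * (expectation (D 0) - muD) = 0" by (simp add: algebra_simps)
  then have "expectation (D 0) = muD" using rho by simp
  then show ?thesis using D_mean_const by simp
qed

definition "Xc s \<omega> = D s \<omega> - muD"
definition "v = expectation (\<lambda>\<omega>. Xc 0 \<omega> * Xc 0 \<omega>)"

lemma Dfun_Xc: "Dfun (Xc s)"
  unfolding Xc_def using Dfun_add[OF Dfun_D Dfun_const[of "-muD"]] by simp

lemma Xc_sq: "expectation (\<lambda>\<omega>. Xc s \<omega> * Xc s \<omega>) = v"
proof -
  have "\<And>s. expectation (\<lambda>\<omega>. Xc s \<omega> * Xc s \<omega>)
      = expectation (\<lambda>\<omega>. D s \<omega> * D s \<omega>) - 2 * muD * expectation (D s) + muD\<^sup>2"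
  proof -
    fix s
    have "expectation (\<lambda>\<omega>. Xc s \<omega> * Xc s \<omega>)
      = expectation (\<lambda>\<omega>. D s \<omega> * D s \<omega> - 2 * muD * D s \<omega> + muD\<^sup>2)"
      unfolding Xc_def by (rule Bochner_Integration.integral_cong) (auto simp: algebra_simps power2_eq_square)
    also have "\<dots> = expectation (\<lambda>\<omega>. D s \<omega> * D s \<omega>) - 2 * muD * expectation (D s) + muD\<^sup>2"
      using Dfun_int2[OF Dfun_D Dfun_D, of s s] D_int[of s] by (simp add: prob_space)
    finally show "?thesis s" .
  qed
  then show ?thesis unfolding v_def using D_sq_const[of s] D_mean by simp
qed

lemma eps_sq: "expectation (\<lambda>\<omega>. eps t \<omega> * eps t \<omega>) = sigma2"
  using eps_var[of t] eps_mean[of t] by (simp add: power2_eq_square)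

lemma Xc_rec: "\<omega> \<in> space M \<Longrightarrow> Xc s \<omega> = rho * Xc (s - 1) \<omega> + eps s \<omega>"
  unfolding Xc_def using D_rec[of _ s] by simp


definition "Z = (\<lambda>i \<omega>. case i of Inl t \<Rightarrow> eps t \<omega> | Inr t \<Rightarrow> real (L t \<omega>))"

lemma Z_int: "integrable M (Z i)"
  by (cases i) (auto simp: Z_def eps_int intro: Lfun_int[OF Lfun_L])

lemma indep2:
  assumes "i \<noteq> j"
  shows "expectation (\<lambda>\<omega>. Z i \<omega> * Z j \<omega>) = expectation (Z i) * expectation (Z j)"
proof -
  have "indep_vars (\<lambda>_. borel) Z UNIV" unfolding Z_def by (rule indep)
  then have ind: "indep_vars (\<lambda>_. borel) Z {i, j}" by (rule indep_vars_subset) auto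
  have "expectation (\<lambda>\<omega>. \<Prod>k\<in>{i,j}. Z k \<omega>) = (\<Prod>k\<in>{i,j}. expectation (Z k))"
    by (rule indep_vars_lebesgue_integral[OF _ ind]) (auto intro: Z_int)
  then show ?thesis using assms by simp
qed

lemma eps_orth: "t \<noteq> s \<Longrightarrow> expectation (\<lambda>\<omega>. eps t \<omega> * eps s \<omega>) = 0"
  using indep2[of "Inl t" "Inl s"] eps_mean by (simp add: Z_def)

lemma L_indep: "a \<noteq> b \<Longrightarrow> expectation (\<lambda>\<omega>. real (L a \<omega>) * real (L b \<omega>))
   = expectation (\<lambda>\<omega>. real (L a \<omega>)) * expectation (\<lambda>\<omega>. real (L b \<omega>))"
  using indep2[of "Inr a" "Inr b"] by (simp add: Z_def)

lemma L_shift: fixes g :: "nat \<Rightarrow> real"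
  shows "expectation (\<lambda>\<omega>. g (L t \<omega>)) = expectation (\<lambda>\<omega>. g (L 0 \<omega>))"
proof -
  have "expectation (\<lambda>\<omega>. g (L t \<omega>)) = integral\<^sup>L (distr M (count_space UNIV) (L t)) g"
    by (rule integral_distr[symmetric]) auto
  also have "\<dots> = integral\<^sup>L (distr M (count_space UNIV) (L 0)) g" by (subst L_id[of t]) (rule refl)
  also have "\<dots> = expectation (\<lambda>\<omega>. g (L 0 \<omega>))"
    by (rule integral_distr) auto
  finally show ?thesis .
qed

lemma abs_prod_le: fixes a b :: real shows "\<bar>a * b\<bar> \<le> (a * a + b * b) / 2"
proof -
  have "0 \<le> (\<bar>a\<bar> - \<bar>b\<bar>)\<^sup>2" by simp
  then have "2 * (\<bar>a\<bar> * \<bar>b\<bar>) \<le> a\<^sup>2 + b\<^sup>2"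
    unfolding power2_diff power2_abs by simp
  then show ?thesis unfolding abs_mult power2_eq_square by (simp add: field_simps)
qed

lemma abs_prod_le2: fixes a b :: real shows "\<bar>a * b\<bar> * 2 \<le> a * a + b * b"
  using abs_prod_le[of a b] by (simp add: field_simps)

lemma Xc_iter: "\<omega> \<in> space M \<Longrightarrow>
   Xc s \<omega> = rho ^ K * Xc (s - int K) \<omega> + (\<Sum>k<K. rho ^ k * eps (s - int k) \<omega>)"
proof (induction K)
  case 0 then show ?case by simp
next
  case (Suc K)
  have "Xc (s - int K) \<omega> = rho * Xc (s - int (Suc K)) \<omega> + eps (s - int K) \<omega>"
    using Xc_rec[OF Suc.prems, of "s - int K"] by (simp add: algebra_simps)
  then show ?case using Suc by (simp add: algebra_simps)
qed

lemma cross_bound: "\<bar>expectation (\<lambda>\<omega>. eps t \<omega> * Xc u \<omega>)\<bar> \<le> (sigma2 + v) / 2"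
proof -
  have "\<bar>expectation (\<lambda>\<omega>. eps t \<omega> * Xc u \<omega>)\<bar> \<le> expectation (\<lambda>\<omega>. norm (eps t \<omega> * Xc u \<omega>))"
    using integral_norm_bound[of M "\<lambda>\<omega>. eps t \<omega> * Xc u \<omega>"] by simp
  also have "\<dots> \<le> expectation (\<lambda>\<omega>. (eps t \<omega> * eps t \<omega> + Xc u \<omega> * Xc u \<omega>) / 2)"
    using Dfun_int2[OF Dfun_eps Dfun_Xc, of t u] Dfun_int2[OF Dfun_eps Dfun_eps, of t t]
      Dfun_int2[OF Dfun_Xc Dfun_Xc, of u u]
    by (intro integral_mono) (auto simp: abs_prod_le2)
  also have "\<dots> = (sigma2 + v) / 2"
    using Dfun_int2[OF Dfun_eps Dfun_eps, of t t] Dfun_int2[OF Dfun_Xc Dfun_Xc, of u u]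
    by (simp add: eps_sq Xc_sq)
  finally show ?thesis .
qed

lemma eps_Xc: assumes "s < t" shows "expectation (\<lambda>\<omega>. eps t \<omega> * Xc s \<omega>) = 0"
proof -
  let ?E = "expectation (\<lambda>\<omega>. eps t \<omega> * Xc s \<omega>)"
  have step: "?E = rho ^ K * expectation (\<lambda>\<omega>. eps t \<omega> * Xc (s - int K) \<omega>)" for K
  proof -
    have "?E = expectation (\<lambda>\<omega>. rho ^ K * (eps t \<omega> * Xc (s - int K) \<omega>)
                 + (\<Sum>k<K. rho ^ k * (eps t \<omega> * eps (s - int k) \<omega>)))"
      by (rule Bochner_Integration.integral_cong[OF refl], subst Xc_iter[of _ s K])
         (auto simp: algebra_simps sum_distrib_left)
    also have "\<dots> = rho ^ K * expectation (\<lambda>\<omega>. eps t \<omega> * Xc (s - int K) \<omega>)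
                 + (\<Sum>k<K. rho ^ k * expectation (\<lambda>\<omega>. eps t \<omega> * eps (s - int k) \<omega>))"
      using Dfun_int2[OF Dfun_eps Dfun_Xc] Dfun_int2[OF Dfun_eps Dfun_eps]
      by (simp add: Bochner_Integration.integral_sum)
    also have "(\<Sum>k<K. rho ^ k * expectation (\<lambda>\<omega>. eps t \<omega> * eps (s - int k) \<omega>)) = 0"
      using assms by (intro sum.neutral) (auto simp: eps_orth)
    finally show ?thesis by simp
  qed
  have bnd: "\<bar>?E\<bar> \<le> \<bar>rho\<bar> ^ K * ((sigma2 + v) / 2)" for K
  proof -
    have "\<bar>rho\<bar> ^ K * \<bar>expectation (\<lambda>\<omega>. eps t \<omega> * Xc (s - int K) \<omega>)\<bar> \<le> \<bar>rho\<bar> ^ K * ((sigma2 + v) / 2)"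
      by (rule mult_left_mono[OF cross_bound]) simp
    then show ?thesis using step[of K] by (simp add: abs_mult power_abs)
  qed
  have "(\<lambda>K. \<bar>rho\<bar> ^ K * ((sigma2 + v) / 2)) \<longlonglongrightarrow> 0"
    using rho by (intro tendsto_mult_left_zero LIMSEQ_power_zero) auto
  then have "\<bar>?E\<bar> \<le> 0"
    by (rule LIMSEQ_le_const) (use bnd in blast)
  then show ?thesis by simp
qed


lemma Xc_mean: "expectation (Xc s) = 0"
  unfolding Xc_def using D_int[of s] D_mean[of s] by (simp add: prob_space)

lemma v_eq: "v = rho\<^sup>2 * v + sigma2"
proof -
  have "v = expectation (\<lambda>\<omega>. Xc 0 \<omega> * Xc 0 \<omega>)" by (simp add: Xc_sq)
  also have "\<dots> = expectation (\<lambda>\<omega>. rho\<^sup>2 * (Xc (-1) \<omega> * Xc (-1) \<omega>)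
        + 2 * rho * (eps 0 \<omega> * Xc (-1) \<omega>) + eps 0 \<omega> * eps 0 \<omega>)"
    by (rule Bochner_Integration.integral_cong[OF refl], subst (1 2) Xc_rec)
       (auto simp: algebra_simps power2_eq_square)
  also have "\<dots> = rho\<^sup>2 * expectation (\<lambda>\<omega>. Xc (-1) \<omega> * Xc (-1) \<omega>)
        + 2 * rho * expectation (\<lambda>\<omega>. eps 0 \<omega> * Xc (-1) \<omega>) + expectation (\<lambda>\<omega>. eps 0 \<omega> * eps 0 \<omega>)"
    using Dfun_int2[OF Dfun_eps Dfun_Xc] Dfun_int2[OF Dfun_eps Dfun_eps] Dfun_int2[OF Dfun_Xc Dfun_Xc]
    by simp
  also have "\<dots> = rho\<^sup>2 * v + sigma2"
    using eps_Xc[of "-1" 0] by (simp add: Xc_sq eps_sq)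
  finally show ?thesis .
qed

lemma v_val: "v = sigma2 / (1 - rho\<^sup>2)"
proof -
  have "rho\<^sup>2 < 1" using rho by (simp add: abs_less_iff power2_less_1_iff)
  then show ?thesis using v_eq by (simp add: field_simps)
qed

lemma Xc_cov: "expectation (\<lambda>\<omega>. Xc (b + int k) \<omega> * Xc b \<omega>) = rho ^ k * v"
proof (induction k)
  case 0 then show ?case by (simp add: Xc_sq)
next
  case (Suc k)
  have "expectation (\<lambda>\<omega>. Xc (b + int (Suc k)) \<omega> * Xc b \<omega>)
      = expectation (\<lambda>\<omega>. rho * (Xc (b + int k) \<omega> * Xc b \<omega>) + eps (b + int (Suc k)) \<omega> * Xc b \<omega>)"
    by (rule Bochner_Integration.integral_cong[OF refl], subst Xc_rec) (auto simp: algebra_simps)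
  also have "\<dots> = rho * expectation (\<lambda>\<omega>. Xc (b + int k) \<omega> * Xc b \<omega>)
      + expectation (\<lambda>\<omega>. eps (b + int (Suc k)) \<omega> * Xc b \<omega>)"
    using Dfun_int2[OF Dfun_eps Dfun_Xc] Dfun_int2[OF Dfun_Xc Dfun_Xc] by simp
  also have "\<dots> = rho ^ Suc k * v" using Suc eps_Xc[of b "b + int (Suc k)"] by simp
  finally show ?case .
qed

definition "Yc s \<omega> = real (L s \<omega>) - muL"

lemma Lfun_Yc: "Lfun (Yc s)"
  unfolding Yc_def using Lfun_add[OF Lfun_L Lfun_const[of "-muL"]] by simp

lemma EL: "expectation (\<lambda>\<omega>. real (L s \<omega>)) = muL"
  using L_shift[of real s] L_mean by simp

lemma Yc_mean: "expectation (Yc s) = 0"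
  unfolding Yc_def using Lfun_int[OF Lfun_L] EL by (simp add: prob_space)

lemma Yc_sq: "expectation (\<lambda>\<omega>. Yc s \<omega> * Yc s \<omega>) = sigmaL2"
proof -
  have "expectation (\<lambda>\<omega>. Yc s \<omega> * Yc s \<omega>) = expectation (\<lambda>\<omega>. (real (L s \<omega>) - muL)\<^sup>2)"
    unfolding Yc_def by (simp add: power2_eq_square)
  also have "\<dots> = expectation (\<lambda>\<omega>. (real (L 0 \<omega>) - muL)\<^sup>2)"
    using L_shift[of "\<lambda>x. (real x - muL)\<^sup>2" s] by simp
  also have "\<dots> = sigmaL2" using L_var L_mean by simp
  finally show ?thesis .
qed

lemma Yc_orth: assumes "a \<noteq> b" shows "expectation (\<lambda>\<omega>. Yc a \<omega> * Yc b \<omega>) = 0"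
proof -
  have i: "integrable M (\<lambda>\<omega>. real (L a \<omega>) * real (L b \<omega>))"
    using Lfun_int[OF Lfun_mult[OF Lfun_L Lfun_L]] .
  have "expectation (\<lambda>\<omega>. Yc a \<omega> * Yc b \<omega>)
     = expectation (\<lambda>\<omega>. real (L a \<omega>) * real (L b \<omega>) - muL * real (L a \<omega>) - muL * real (L b \<omega>) + muL * muL)"
    unfolding Yc_def by (rule Bochner_Integration.integral_cong) (auto simp: algebra_simps)
  also have "\<dots> = 0"
    using i Lfun_int[OF Lfun_L] L_indep[OF assms] EL by (simp add: prob_space)
  finally show ?thesis .
qed


lemma sum_shift: fixes f :: "int \<Rightarrow> real"
  shows "(\<Sum>i\<in>{1..k}. f (t - int i)) - (\<Sum>i\<in>{1..k}. f (t - 1 - int i)) = f (t - 1) - f (t - 1 - int k)"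
proof (induction k)
  case 0 then show ?case by simp
next
  case (Suc k)
  have e: "t - int (Suc k) = t - 1 - int k" by simp
  show ?case using Suc by (simp add: sum.cl_ivl_Suc e algebra_simps)
qed

lemma Yc_sumsq: assumes "finite I" "inj_on h I"
  shows "expectation (\<lambda>\<omega>. (\<Sum>i\<in>I. Yc (h i) \<omega>) * (\<Sum>i\<in>I. Yc (h i) \<omega>)) = real (card I) * sigmaL2"
proof -
  have i: "integrable M (\<lambda>\<omega>. Yc a \<omega> * Yc b \<omega>)" for a b
    using Lfun_int[OF Lfun_mult[OF Lfun_Yc Lfun_Yc]] .
  have "expectation (\<lambda>\<omega>. (\<Sum>i\<in>I. Yc (h i) \<omega>) * (\<Sum>i\<in>I. Yc (h i) \<omega>))
     = expectation (\<lambda>\<omega>. \<Sum>i\<in>I. \<Sum>j\<in>I. Yc (h i) \<omega> * Yc (h j) \<omega>)"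
    by (simp add: sum_product)
  also have "\<dots> = (\<Sum>i\<in>I. \<Sum>j\<in>I. expectation (\<lambda>\<omega>. Yc (h i) \<omega> * Yc (h j) \<omega>))"
    using i by (simp add: Bochner_Integration.integral_sum)
  also have "\<dots> = (\<Sum>i\<in>I. \<Sum>j\<in>I. if j = i then sigmaL2 else 0)"
  proof (intro sum.cong refl)
    fix i j assume "i \<in> I" "j \<in> I"
    then show "expectation (\<lambda>\<omega>. Yc (h i) \<omega> * Yc (h j) \<omega>) = (if j = i then sigmaL2 else 0)"
      using assms(2) Yc_sq Yc_orth[of "h i" "h j"] by (auto simp: inj_on_def)
  qed
  also have "\<dots> = real (card I) * sigmaL2" using assms(1) by simp
  finally show ?thesis .
qed

definition "Aq t \<omega> = L_hat m Lplus L t \<omega> - muL"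
definition "Bq t \<omega> = D_hat n D t \<omega> - muD"

lemma Aq_eq: "Aq t \<omega> = (1 / real m) * (\<Sum>i\<in>{1..m}. Yc (t - int i - int Lplus) \<omega>)"
proof -
  have "(1 / real m) * (\<Sum>i\<in>{1..m}. Yc (t - int i - int Lplus) \<omega>)
     = (1 / real m) * (\<Sum>i\<in>{1..m}. real (L (t - int i - int Lplus) \<omega>)) - (1 / real m) * (real m * muL)"
    unfolding Yc_def by (simp add: sum_subtractf algebra_simps)
  also have "\<dots> = L_hat m Lplus L t \<omega> - muL" using m unfolding L_hat_def by simp
  finally show ?thesis unfolding Aq_def by simp
qed

lemma Bq_eq: "Bq t \<omega> = (1 / real n) * (\<Sum>i\<in>{1..n}. Xc (t - int i) \<omega>)"
proof -
  have "(1 / real n) * (\<Sum>i\<in>{1..n}. Xc (t - int i) \<omega>)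
     = (1 / real n) * (\<Sum>i\<in>{1..n}. D (t - int i) \<omega>) - (1 / real n) * (real n * muD)"
    unfolding Xc_def by (simp add: sum_subtractf algebra_simps)
  also have "\<dots> = D_hat n D t \<omega> - muD" using n unfolding D_hat_def by simp
  finally show ?thesis unfolding Bq_def by simp
qed

lemma Lfun_cmult: "Lfun X \<Longrightarrow> Lfun (\<lambda>\<omega>. c * X \<omega>)"
  using Lfun_mult[OF Lfun_const] by blast

lemma Lfun_Aq: "Lfun (Aq t)"
  unfolding Aq_eq[abs_def] by (intro Lfun_cmult Lfun_sum Lfun_Yc) auto

lemma Dfun_Bq: "Dfun (Bq t)"
  unfolding Bq_eq[abs_def] by (intro Dfun_mult Dfun_sum Dfun_Xc) auto

lemma Aq_mean: "expectation (Aq t) = 0"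
  unfolding Aq_eq[abs_def] using Lfun_int[OF Lfun_Yc] by (simp add: Yc_mean Bochner_Integration.integral_sum)

lemma Bq_mean: "expectation (Bq t) = 0"
  unfolding Bq_eq[abs_def] using Dfun_int[OF Dfun_Xc] by (simp add: Xc_mean Bochner_Integration.integral_sum)

lemma Aq_sq: "expectation (\<lambda>\<omega>. Aq t \<omega> * Aq t \<omega>) = sigmaL2 / real m"
proof -
  have inj: "inj_on (\<lambda>i. t - int i - int Lplus) {1..m}" by (auto simp: inj_on_def)
  have "expectation (\<lambda>\<omega>. Aq t \<omega> * Aq t \<omega>) = (1 / real m)^2 *
      expectation (\<lambda>\<omega>. (\<Sum>i\<in>{1..m}. Yc (t - int i - int Lplus) \<omega>) * (\<Sum>i\<in>{1..m}. Yc (t - int i - int Lplus) \<omega>))"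
    unfolding Aq_eq by (simp add: power2_eq_square algebra_simps)
  also have "\<dots> = sigmaL2 / real m"
    using Yc_sumsq[OF _ inj] m by (simp add: power2_eq_square)
  finally show ?thesis .
qed

lemma Aq_diff: "Aq t \<omega> - Aq (t - 1) \<omega> = (1 / real m) * (Yc (t - 1 - int Lplus) \<omega> - Yc (t - 1 - int m - int Lplus) \<omega>)"
proof -
  have "Aq t \<omega> - Aq (t - 1) \<omega> = (1 / real m) * ((\<Sum>i\<in>{1..m}. Yc (t - int i - int Lplus) \<omega>)
     - (\<Sum>i\<in>{1..m}. Yc (t - 1 - int i - int Lplus) \<omega>))"
    unfolding Aq_eq by (simp add: algebra_simps)
  also have "\<dots> = (1 / real m) * (Yc (t - 1 - int Lplus) \<omega> - Yc (t - 1 - int m - int Lplus) \<omega>)"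
    using sum_shift[of "\<lambda>s. Yc (s - int Lplus) \<omega>" t m] by simp
  finally show ?thesis .
qed

lemma Bq_diff: "Bq t \<omega> - Bq (t - 1) \<omega> = (1 / real n) * (Xc (t - 1) \<omega> - Xc (t - 1 - int n) \<omega>)"
proof -
  have "Bq t \<omega> - Bq (t - 1) \<omega> = (1 / real n) * ((\<Sum>i\<in>{1..n}. Xc (t - int i) \<omega>)
     - (\<Sum>i\<in>{1..n}. Xc (t - 1 - int i) \<omega>))"
    unfolding Bq_eq by (simp add: algebra_simps)
  also have "\<dots> = (1 / real n) * (Xc (t - 1) \<omega> - Xc (t - 1 - int n) \<omega>)"
    using sum_shift[of "\<lambda>s. Xc s \<omega>" t n] by simp
  finally show ?thesis .
qed


lemma lin2: fixes a b c d :: real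
  shows "integrable M (\<lambda>\<omega>. P \<omega> * P \<omega>) \<Longrightarrow> integrable M (\<lambda>\<omega>. P \<omega> * Q \<omega>) \<Longrightarrow> integrable M (\<lambda>\<omega>. Q \<omega> * Q \<omega>) \<Longrightarrow>
  expectation (\<lambda>\<omega>. (a * P \<omega> + b * Q \<omega>) * (a * P \<omega> + b * Q \<omega>))
   = a * a * expectation (\<lambda>\<omega>. P \<omega> * P \<omega>) + 2 * a * b * expectation (\<lambda>\<omega>. P \<omega> * Q \<omega>)
     + b * b * expectation (\<lambda>\<omega>. Q \<omega> * Q \<omega>)"
proof -
  assume i: "integrable M (\<lambda>\<omega>. P \<omega> * P \<omega>)" "integrable M (\<lambda>\<omega>. P \<omega> * Q \<omega>)" "integrable M (\<lambda>\<omega>. Q \<omega> * Q \<omega>)"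
  have "expectation (\<lambda>\<omega>. (a * P \<omega> + b * Q \<omega>) * (a * P \<omega> + b * Q \<omega>))
     = expectation (\<lambda>\<omega>. (a * a) * (P \<omega> * P \<omega>) + (2 * a * b) * (P \<omega> * Q \<omega>) + (b * b) * (Q \<omega> * Q \<omega>))"
    by (rule Bochner_Integration.integral_cong) (auto simp: algebra_simps)
  also have "\<dots> = a * a * expectation (\<lambda>\<omega>. P \<omega> * P \<omega>) + 2 * a * b * expectation (\<lambda>\<omega>. P \<omega> * Q \<omega>)
     + b * b * expectation (\<lambda>\<omega>. Q \<omega> * Q \<omega>)"
    using i by simp
  finally show ?thesis .
qed

lemma Aq_dsq: "expectation (\<lambda>\<omega>. (Aq t \<omega> - Aq (t - 1) \<omega>) * (Aq t \<omega> - Aq (t - 1) \<omega>)) = 2 * sigmaL2 / (real m)\<^sup>2"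
proof -
  let ?a = "t - 1 - int Lplus" and ?b = "t - 1 - int m - int Lplus"
  have ne: "?a \<noteq> ?b" using m by simp
  have i: "integrable M (\<lambda>\<omega>. Yc a \<omega> * Yc b \<omega>)" for a b
    using Lfun_int[OF Lfun_mult[OF Lfun_Yc Lfun_Yc]] .
  have "expectation (\<lambda>\<omega>. (Aq t \<omega> - Aq (t - 1) \<omega>) * (Aq t \<omega> - Aq (t - 1) \<omega>))
    = expectation (\<lambda>\<omega>. ((1 / real m) * Yc ?a \<omega> + (- 1 / real m) * Yc ?b \<omega>) * ((1 / real m) * Yc ?a \<omega> + (- 1 / real m) * Yc ?b \<omega>))"
    unfolding Aq_diff by (simp add: algebra_simps)
  also have "\<dots> = 2 * sigmaL2 / (real m)\<^sup>2"
    by (subst lin2[OF i i i], simp only: Yc_sq Yc_orth[OF ne]) (simp add: power2_eq_square field_simps)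
  finally show ?thesis .
qed

lemma Xc_cov_n: "expectation (\<lambda>\<omega>. Xc (t - 1) \<omega> * Xc (t - 1 - int n) \<omega>) = rho ^ n * v"
  using Xc_cov[of "t - 1 - int n" n] by simp

lemma Bq_dsq: "expectation (\<lambda>\<omega>. (Bq t \<omega> - Bq (t - 1) \<omega>) * (Bq t \<omega> - Bq (t - 1) \<omega>))
   = 2 * v * (1 - rho ^ n) / (real n)\<^sup>2"
proof -
  let ?a = "t - 1" and ?b = "t - 1 - int n"
  have i: "integrable M (\<lambda>\<omega>. Xc a \<omega> * Xc b \<omega>)" for a b
    using Dfun_int2[OF Dfun_Xc Dfun_Xc] .
  have "expectation (\<lambda>\<omega>. (Bq t \<omega> - Bq (t - 1) \<omega>) * (Bq t \<omega> - Bq (t - 1) \<omega>))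
    = expectation (\<lambda>\<omega>. ((1 / real n) * Xc ?a \<omega> + (- 1 / real n) * Xc ?b \<omega>) * ((1 / real n) * Xc ?a \<omega> + (- 1 / real n) * Xc ?b \<omega>))"
    unfolding Bq_diff by (simp add: algebra_simps)
  also have "\<dots> = 2 * v * (1 - rho ^ n) / (real n)\<^sup>2"
    using n by (subst lin2[OF i i i], simp only: Xc_sq Xc_cov_n) (simp add: power2_eq_square field_simps)
  finally show ?thesis .
qed

definition "Y2 t \<omega> = muL * (Bq t \<omega> - Bq (t - 1) \<omega>) + Xc (t - 1) \<omega>"

lemma Y2_eq: "Y2 t \<omega> = (1 + muL / real n) * Xc (t - 1) \<omega> + (- muL / real n) * Xc (t - 1 - int n) \<omega>"
  unfolding Y2_def Bq_diff by (simp add: algebra_simps)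

lemma Dfun_Y2: "Dfun (Y2 t)"
  unfolding Y2_eq[abs_def] by (intro Dfun_add Dfun_mult Dfun_Xc)

lemma Y2_mean: "expectation (Y2 t) = 0"
  unfolding Y2_eq[abs_def] using Dfun_int[OF Dfun_Xc] by (simp add: Xc_mean)

lemma Y2_sq: "expectation (\<lambda>\<omega>. Y2 t \<omega> * Y2 t \<omega>)
   = v * ((1 + muL / real n)\<^sup>2 + (muL / real n)\<^sup>2 - 2 * (1 + muL / real n) * (muL / real n) * rho ^ n)"
proof -
  have i: "integrable M (\<lambda>\<omega>. Xc a \<omega> * Xc b \<omega>)" for a b
    using Dfun_int2[OF Dfun_Xc Dfun_Xc] .
  show ?thesis
    unfolding Y2_eq by (subst lin2[OF i i i], simp only: Xc_sq Xc_cov_n) (simp add: power2_eq_square algebra_simps)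
qed

lemma geo: "(\<Sum>i\<in>{1..k}. rho ^ (k + 1 - i)) = rho * (1 - rho ^ k) / (1 - rho)"
proof (induction k)
  case 0 then show ?case by simp
next
  case (Suc k)
  have e: "(\<Sum>i\<in>{1..k}. rho ^ (Suc k + 1 - i)) = (\<Sum>i\<in>{1..k}. rho * rho ^ (k + 1 - i))"
    by (intro sum.cong refl) (simp add: Suc_diff_le)
  have "(\<Sum>i\<in>{1..Suc k}. rho ^ (Suc k + 1 - i)) = (\<Sum>i\<in>{1..k}. rho ^ (Suc k + 1 - i)) + rho"
    by (simp add: sum.cl_ivl_Suc)
  also have "\<dots> = (\<Sum>i\<in>{1..k}. rho * rho ^ (k + 1 - i)) + rho" by (simp only: e)
  also have "\<dots> = rho * (rho * (1 - rho ^ k) / (1 - rho)) + rho"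
    by (simp only: sum_distrib_left[symmetric] Suc.IH)
  also have "\<dots> = rho * (1 - rho ^ Suc k) / (1 - rho)"
    using rho by (simp add: field_simps)
  finally show ?case .
qed

lemma Xsum_sq: "expectation (\<lambda>\<omega>. (\<Sum>i\<in>{1..k}. Xc (t - int i) \<omega>) * (\<Sum>i\<in>{1..k}. Xc (t - int i) \<omega>))
   = v * (real k * (1 + rho) / (1 - rho) - 2 * rho * (1 - rho ^ k) / (1 - rho)\<^sup>2)"
proof (induction k)
  case 0 then show ?case by simp
next
  case (Suc k)
  define S where "S \<omega> = (\<Sum>i\<in>{1..k}. Xc (t - int i) \<omega>)" for \<omega>
  let ?X = "Xc (t - int (Suc k))"
  have dS: "Dfun S" unfolding S_def[abs_def] by (intro Dfun_sum Dfun_Xc) auto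
  have cross: "expectation (\<lambda>\<omega>. S \<omega> * ?X \<omega>) = v * (rho * (1 - rho ^ k) / (1 - rho))"
  proof -
    have "expectation (\<lambda>\<omega>. S \<omega> * ?X \<omega>) = (\<Sum>i\<in>{1..k}. expectation (\<lambda>\<omega>. Xc (t - int i) \<omega> * ?X \<omega>))"
      unfolding S_def sum_distrib_right
      by (rule Bochner_Integration.integral_sum) (rule Dfun_int2[OF Dfun_Xc Dfun_Xc])
    also have "\<dots> = (\<Sum>i\<in>{1..k}. rho ^ (k + 1 - i) * v)"
    proof (intro sum.cong refl)
      fix i assume "i \<in> {1..k}"
      then have e: "(t - int (Suc k)) + int (k + 1 - i) = t - int i" by auto
      show "expectation (\<lambda>\<omega>. Xc (t - int i) \<omega> * ?X \<omega>) = rho ^ (k + 1 - i) * v"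
        using Xc_cov[of "t - int (Suc k)" "k + 1 - i", unfolded e] .
    qed
    also have "\<dots> = v * (rho * (1 - rho ^ k) / (1 - rho))"
      unfolding sum_distrib_right[symmetric] geo by simp
    finally show ?thesis .
  qed
  have "expectation (\<lambda>\<omega>. (\<Sum>i\<in>{1..Suc k}. Xc (t - int i) \<omega>) * (\<Sum>i\<in>{1..Suc k}. Xc (t - int i) \<omega>))
      = expectation (\<lambda>\<omega>. (1 * S \<omega> + 1 * ?X \<omega>) * (1 * S \<omega> + 1 * ?X \<omega>))"
    by (simp add: sum.cl_ivl_Suc S_def)
  also have "\<dots> = expectation (\<lambda>\<omega>. S \<omega> * S \<omega>) + 2 * expectation (\<lambda>\<omega>. S \<omega> * ?X \<omega>) + v"
    by (subst lin2) (auto intro: Dfun_int2 dS Dfun_Xc simp: Xc_sq)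
  also have "\<dots> = v * (real (Suc k) * (1 + rho) / (1 - rho) - 2 * rho * (1 - rho ^ Suc k) / (1 - rho)\<^sup>2)"
    unfolding cross Suc.IH[folded S_def] using alg1[where r=rho and p="rho ^ k" and v=v and k="real k"] rho by (simp add: add.commute)
  finally show ?case .
qed

lemma Bq_sq: "expectation (\<lambda>\<omega>. Bq t \<omega> * Bq t \<omega>)
   = v * (real n * (1 + rho) / (1 - rho) - 2 * rho * (1 - rho ^ n) / (1 - rho)\<^sup>2) / (real n)\<^sup>2"
proof -
  have "expectation (\<lambda>\<omega>. Bq t \<omega> * Bq t \<omega>) = (1 / real n)^2 *
      expectation (\<lambda>\<omega>. (\<Sum>i\<in>{1..n}. Xc (t - int i) \<omega>) * (\<Sum>i\<in>{1..n}. Xc (t - int i) \<omega>))"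
    unfolding Bq_eq by (simp add: power2_eq_square algebra_simps)
  also have "\<dots> = (1 / real n)^2 * (v * (real n * (1 + rho) / (1 - rho) - 2 * rho * (1 - rho ^ n) / (1 - rho)\<^sup>2))"
    by (simp only: Xsum_sq)
  finally show ?thesis by (simp add: power_one_over)
qed


end


lemma alg2: fixes r p v sL muD muL N Mm :: real
  assumes v: "v \<noteq> 0" and N: "N \<noteq> 0" and Mm: "Mm \<noteq> 0" and r: "r \<noteq> 1"
  shows "(muD\<^sup>2 * (2 * sL / Mm\<^sup>2)
     + v * ((1 + muL / N)\<^sup>2 + (muL / N)\<^sup>2 - 2 * (1 + muL / N) * (muL / N) * p)
     + 2 * (sL / Mm) * (v * (N * (1 + r) / (1 - r) - 2 * r * (1 - p) / (1 - r)\<^sup>2) / N\<^sup>2)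
     - 2 * (sL / Mm - sL / Mm\<^sup>2) * (v * (N * (1 + r) / (1 - r) - 2 * r * (1 - p) / (1 - r)\<^sup>2) / N\<^sup>2
         - (2 * v * (1 - p) / N\<^sup>2) / 2)) / v
   = 2 * sL / (N ^ 2 * Mm ^ 2)
               * (Mm * (1 - p) + N * (1 + r) / (1 - r)
                  - (1 + r ^ 2) * (1 - p) / (1 - r) ^ 2)
             + 2 * sL * muD ^ 2 / (v * Mm ^ 2)
             + (2 * muL ^ 2 / N ^ 2 + 2 * muL / N) * (1 - p) + 1"
proof -
  define q where "q = 1 - r"
  have d: "q \<noteq> 0" using r by (simp add: q_def)
  have rr: "r = 1 - q" by (simp add: q_def)
  show ?thesis unfolding rr using d v N Mm by (simp add: field_simps) (simp add: algebra_simps eval_nat_numeral)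
qed


context bw begin
lemma solve_c: fixes a b c d :: real shows "a = b - 2 * c + d \<Longrightarrow> c = (b + d - a) / 2"
  by simp

lemma Lfun_neg: "Lfun X \<Longrightarrow> Lfun (\<lambda>\<omega>. - X \<omega>)"
  using Lfun_cmult[of X "-1"] by simp

lemma Lfun_diff: "Lfun X \<Longrightarrow> Lfun W \<Longrightarrow> Lfun (\<lambda>\<omega>. X \<omega> - W \<omega>)"
  using Lfun_add[OF _ Lfun_neg[of W], of X] by simp

lemma lin_diff: fixes P Q :: "'a \<Rightarrow> real" shows "integrable M (\<lambda>\<omega>. P \<omega> * P \<omega>) \<Longrightarrow> integrable M (\<lambda>\<omega>. P \<omega> * Q \<omega>) \<Longrightarrow> integrable M (\<lambda>\<omega>. Q \<omega> * Q \<omega>) \<Longrightarrow>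
  expectation (\<lambda>\<omega>. (P \<omega> - Q \<omega>) * (P \<omega> - Q \<omega>))
   = expectation (\<lambda>\<omega>. P \<omega> * P \<omega>) - 2 * expectation (\<lambda>\<omega>. P \<omega> * Q \<omega>) + expectation (\<lambda>\<omega>. Q \<omega> * Q \<omega>)"
  using lin2[of P Q 1 "-1"] by simp

definition "b0 = v * (real n * (1 + rho) / (1 - rho) - 2 * rho * (1 - rho ^ n) / (1 - rho)\<^sup>2) / (real n)\<^sup>2"
definition "dB = 2 * v * (1 - rho ^ n) / (real n)\<^sup>2"
definition "e2 = v * ((1 + muL / real n)\<^sup>2 + (muL / real n)\<^sup>2 - 2 * (1 + muL / real n) * (muL / real n) * rho ^ n)"

lemma cAA: "expectation (\<lambda>\<omega>. Aq t \<omega> * Aq (t - 1) \<omega>) = sigmaL2 / real m - sigmaL2 / (real m)\<^sup>2"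
proof -
  have i: "integrable M (\<lambda>\<omega>. Aq a \<omega> * Aq b \<omega>)" for a b
    using Lfun_int[OF Lfun_mult[OF Lfun_Aq Lfun_Aq]] .
  note e = lin_diff[OF i i i, of t "t - 1"]
  have "expectation (\<lambda>\<omega>. Aq t \<omega> * Aq (t - 1) \<omega>) = (expectation (\<lambda>\<omega>. Aq t \<omega> * Aq t \<omega>)
     + expectation (\<lambda>\<omega>. Aq (t - 1) \<omega> * Aq (t - 1) \<omega>)
     - expectation (\<lambda>\<omega>. (Aq t \<omega> - Aq (t - 1) \<omega>) * (Aq t \<omega> - Aq (t - 1) \<omega>))) / 2"
    by (rule solve_c[OF e])
  also have "\<dots> = (sigmaL2 / real m + sigmaL2 / real m - 2 * sigmaL2 / (real m)\<^sup>2) / 2"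
    by (simp only: Aq_dsq Aq_sq)
  also have "\<dots> = sigmaL2 / real m - sigmaL2 / (real m)\<^sup>2" by (simp add: field_simps)
  finally show ?thesis .
qed

lemma cBB: "expectation (\<lambda>\<omega>. Bq t \<omega> * Bq (t - 1) \<omega>) = b0 - dB / 2"
proof -
  have i: "integrable M (\<lambda>\<omega>. Bq a \<omega> * Bq b \<omega>)" for a b
    using Dfun_int2[OF Dfun_Bq Dfun_Bq] .
  note e = lin_diff[OF i i i, of t "t - 1"]
  have "expectation (\<lambda>\<omega>. Bq t \<omega> * Bq (t - 1) \<omega>) = (expectation (\<lambda>\<omega>. Bq t \<omega> * Bq t \<omega>)
     + expectation (\<lambda>\<omega>. Bq (t - 1) \<omega> * Bq (t - 1) \<omega>)
     - expectation (\<lambda>\<omega>. (Bq t \<omega> - Bq (t - 1) \<omega>) * (Bq t \<omega> - Bq (t - 1) \<omega>))) / 2"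
    by (rule solve_c[OF e])
  also have "\<dots> = (b0 + b0 - dB) / 2"
    unfolding b0_def dB_def by (simp only: Bq_dsq Bq_sq)
  also have "\<dots> = b0 - dB / 2" by (simp add: field_simps)
  finally show ?thesis .
qed

lemma decomp: "order_qty n m Lplus TNS D L t \<omega> = muD +
   ((Aq t \<omega> - Aq (t - 1) \<omega>) * muD + 1 * Y2 t \<omega> + Aq t \<omega> * Bq t \<omega> + (- Aq (t - 1) \<omega>) * Bq (t - 1) \<omega>)"
proof -
  have a: "L_hat m Lplus L s \<omega> = Aq s \<omega> + muL" for s unfolding Aq_def by simp
  have b: "D_hat n D s \<omega> = Bq s \<omega> + muD" for s unfolding Bq_def by simp
  have c: "D (t - 1) \<omega> = Xc (t - 1) \<omega> + muD" unfolding Xc_def by simp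
  show ?thesis unfolding order_qty_def order_up_to_def a b c Y2_def by (simp add: algebra_simps)
qed

lemma var_q: "variance (order_qty n m Lplus TNS D L t)
   = muD\<^sup>2 * (2 * sigmaL2 / (real m)\<^sup>2) + e2 + 2 * (sigmaL2 / real m) * b0
     - 2 * (sigmaL2 / real m - sigmaL2 / (real m)\<^sup>2) * (b0 - dB / 2)"
proof -
  define XX where "XX k = (if k = 0 then (\<lambda>\<omega>. Aq t \<omega> - Aq (t - 1) \<omega>) else if k = 1 then (\<lambda>_. 1)
      else if k = 2 then Aq t else (\<lambda>\<omega>. - Aq (t - 1) \<omega>))" for k :: nat
  define YY where "YY k = (if k = 0 then (\<lambda>_. muD) else if k = 1 then Y2 t
      else if k = 2 then Bq t else Bq (t - 1))" for k :: nat
  let ?K = "{0::nat, 1, 2, 3}"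
  have sumeq: "order_qty n m Lplus TNS D L t \<omega> = muD + (\<Sum>k\<in>?K. XX k \<omega> * YY k \<omega>)" for \<omega>
    unfolding decomp by (simp add: XX_def YY_def)
  have XY: "Lfun (XX k) \<and> Dfun (YY k)" if "k \<in> ?K" for k
    using that by (auto simp: XX_def YY_def intro: Lfun_diff Lfun_neg Lfun_Aq Lfun_const
       Dfun_const Dfun_Y2 Dfun_Bq)
  have ME1: "integrable M (\<lambda>\<omega>. \<Sum>k\<in>?K. XX k \<omega> * YY k \<omega>)"
    by (rule mean_expand(1)[where K="?K" and X=XX and Y=YY]) (simp, erule XY)
  have ME2: "expectation (\<lambda>\<omega>. \<Sum>k\<in>?K. XX k \<omega> * YY k \<omega>) = (\<Sum>k\<in>?K. expectation (XX k) * expectation (YY k))"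
    by (rule mean_expand(2)[where K="?K" and X=XX and Y=YY]) (simp, erule XY)
  have SE2: "expectation (\<lambda>\<omega>. (\<Sum>k\<in>?K. XX k \<omega> * YY k \<omega>)\<^sup>2)
      = (\<Sum>k\<in>?K. \<Sum>l\<in>?K. expectation (\<lambda>\<omega>. XX k \<omega> * XX l \<omega>) * expectation (\<lambda>\<omega>. YY k \<omega> * YY l \<omega>))"
    by (rule sq_expand(2)[where K="?K" and X=XX and Y=YY]) (simp, erule XY)
  have iA: "integrable M (Aq s)" for s using Lfun_int[OF Lfun_Aq] .
  have iB: "integrable M (Bq s)" for s using Dfun_int[OF Dfun_Bq] .
  have iY: "integrable M (Y2 s)" for s using Dfun_int[OF Dfun_Y2] .
  have Eq: "expectation (order_qty n m Lplus TNS D L t) = muD"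
  proof -
    have "expectation (order_qty n m Lplus TNS D L t) = expectation (\<lambda>\<omega>. muD + (\<Sum>k\<in>?K. XX k \<omega> * YY k \<omega>))"
      by (rule Bochner_Integration.integral_cong[OF refl]) (rule sumeq)
    also have "\<dots> = expectation (\<lambda>_. muD) + expectation (\<lambda>\<omega>. \<Sum>k\<in>?K. XX k \<omega> * YY k \<omega>)"
      by (rule Bochner_Integration.integral_add[OF integrable_const ME1])
    also have "\<dots> = muD + (\<Sum>k\<in>?K. expectation (XX k) * expectation (YY k))"
      by (simp only: ME2) (simp add: prob_space)
    also have "\<dots> = muD"
      by (simp add: XX_def YY_def Aq_mean Bq_mean Y2_mean iA)
    finally show ?thesis .
  qed
  have "variance (order_qty n m Lplus TNS D L t) = expectation (\<lambda>\<omega>. (\<Sum>k\<in>?K. XX k \<omega> * YY k \<omega>)\<^sup>2)"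
    unfolding Eq by (simp only: sumeq) simp
  also have "\<dots> = (\<Sum>k\<in>?K. \<Sum>l\<in>?K. expectation (\<lambda>\<omega>. XX k \<omega> * XX l \<omega>) * expectation (\<lambda>\<omega>. YY k \<omega> * YY l \<omega>))"
    by (rule SE2)
  also have "\<dots> = muD\<^sup>2 * (2 * sigmaL2 / (real m)\<^sup>2) + e2 + 2 * (sigmaL2 / real m) * b0
     - 2 * (sigmaL2 / real m - sigmaL2 / (real m)\<^sup>2) * (b0 - dB / 2)"
  proof -
    have cAA': "expectation (\<lambda>\<omega>. Aq (t - 1) \<omega> * Aq t \<omega>) = sigmaL2 / real m - sigmaL2 / (real m)\<^sup>2"
      using cAA[of t] by (simp add: mult.commute)
    have cBB': "expectation (\<lambda>\<omega>. Bq (t - 1) \<omega> * Bq t \<omega>) = b0 - dB / 2"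
      using cBB[of t] by (simp add: mult.commute)
    have m0: "real m \<noteq> 0" using m by simp
    show ?thesis
      by (simp add: XX_def YY_def Aq_mean Bq_mean Y2_mean iA iB iY prob_space
        Aq_dsq[of t] Aq_sq[of t] Aq_sq[of "t - 1"] cAA[of t] cBB[of t] Bq_sq[of t, folded b0_def]
        Bq_sq[of "t - 1", folded b0_def] Y2_sq[of t, folded e2_def] cAA' cBB')
        (use m0 in \<open>simp add: field_simps power2_eq_square\<close>)
  qed
  finally show ?thesis .
qed

lemma var_D: "variance (D t) = v"
  using Xc_sq[of t] unfolding D_mean Xc_def by (simp add: power2_eq_square)

lemma v_pos: "v > 0"
proof -
  have "rho\<^sup>2 < 1" using rho by (simp add: abs_less_iff power2_less_1_iff)
  then show ?thesis unfolding v_val using sigma2_pos by simp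
qed

lemma final: "(\<forall>t. variance (order_qty n m Lplus TNS D L t)
              = variance (order_qty n m Lplus TNS D L 0))
       \<and> (\<forall>t. variance (order_qty n m Lplus TNS D L t) / variance (D t)
           = 2 * sigmaL2 / (real n ^ 2 * real m ^ 2)
               * (real m * (1 - rho ^ n) + real n * (1 + rho) / (1 - rho)
                  - (1 + rho ^ 2) * (1 - rho ^ n) / (1 - rho) ^ 2)
             + 2 * sigmaL2 * muD ^ 2 / ((sigma2 / (1 - rho ^ 2)) * real m ^ 2)
             + (2 * muL ^ 2 / real n ^ 2 + 2 * muL / real n) * (1 - rho ^ n) + 1)"
proof (intro conjI allI)
  fix t
  show "variance (order_qty n m Lplus TNS D L t) = variance (order_qty n m Lplus TNS D L 0)"
    unfolding var_q ..
  have v0: "v \<noteq> 0" using v_pos by simp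
  have n0: "real n \<noteq> 0" using n by simp
  have m0: "real m \<noteq> 0" using m by simp
  have r1: "rho \<noteq> 1" using rho by simp
  show "variance (order_qty n m Lplus TNS D L t) / variance (D t)
           = 2 * sigmaL2 / (real n ^ 2 * real m ^ 2)
               * (real m * (1 - rho ^ n) + real n * (1 + rho) / (1 - rho)
                  - (1 + rho ^ 2) * (1 - rho ^ n) / (1 - rho) ^ 2)
             + 2 * sigmaL2 * muD ^ 2 / ((sigma2 / (1 - rho ^ 2)) * real m ^ 2)
             + (2 * muL ^ 2 / real n ^ 2 + 2 * muL / real n) * (1 - rho ^ n) + 1"
    unfolding var_q var_D e2_def b0_def dB_def v_val[symmetric]
    by (rule alg2[OF v0 n0 m0 r1])
qed

end

theorem theorem1:
  fixes M :: "'a measure"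
    and eps D :: "int \<Rightarrow> 'a \<Rightarrow> real"
    and L :: "int \<Rightarrow> 'a \<Rightarrow> nat"
    and muD rho sigma2 muL sigmaL2 TNS :: real
    and Lplus n m :: nat
  assumes P: "prob_space M"
    and rho: "-1 < rho" "rho < 1"
    and eps_rv: "\<And>t. eps t \<in> borel_measurable M"
    and eps_L2: "\<And>t. integrable M (\<lambda>\<omega>. (eps t \<omega>)\<^sup>2)"
    and eps_mean: "\<And>t. prob_space.expectation M (eps t) = 0"
    and eps_var: "\<And>t. prob_space.variance M (eps t) = sigma2"
    and sigma2_pos: "0 < sigma2"
    and eps_id: "\<And>t. distr M borel (eps t) = distr M borel (eps 0)"
    and L_rv: "\<And>t. L t \<in> measurable M (count_space UNIV)"
    and L_range: "\<And>t \<omega>. \<omega> \<in> space M \<Longrightarrow> L t \<omega> \<le> Lplus"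
    and L_id: "\<And>t. distr M (count_space UNIV) (L t) = distr M (count_space UNIV) (L 0)"
    and L_mean: "prob_space.expectation M (\<lambda>\<omega>. real (L 0 \<omega>)) = muL"
    and L_var: "prob_space.variance M (\<lambda>\<omega>. real (L 0 \<omega>)) = sigmaL2"
    and indep: "prob_space.indep_vars M (\<lambda>_. borel)
                  (\<lambda>i \<omega>. case i of Inl t \<Rightarrow> eps t \<omega> | Inr t \<Rightarrow> real (L t \<omega>)) UNIV"
    and indep_LD: "prob_space.indep_set M
          (sigma_sets (space M) (\<Union>t. {(\<lambda>\<omega>. real (L t \<omega>)) -` A \<inter> space M | A. A \<in> sets borel}))
          (sigma_sets (space M) ((\<Union>t. {eps t -` A \<inter> space M | A. A \<in> sets borel})
                                  \<union> (\<Union>t. {D t -` A \<inter> space M | A. A \<in> sets borel})))"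
    and AR1: "prob_space.stationary_AR1 M muD rho eps D"
    and n: "n \<ge> 1" and m: "m \<ge> 1"
  shows "(\<forall>t. prob_space.variance M (order_qty n m Lplus TNS D L t)
              = prob_space.variance M (order_qty n m Lplus TNS D L 0))
       \<and> (\<forall>t. prob_space.variance M (order_qty n m Lplus TNS D L t) / prob_space.variance M (D t)
           = 2 * sigmaL2 / (real n ^ 2 * real m ^ 2)
               * (real m * (1 - rho ^ n) + real n * (1 + rho) / (1 - rho)
                  - (1 + rho ^ 2) * (1 - rho ^ n) / (1 - rho) ^ 2)
             + 2 * sigmaL2 * muD ^ 2 / ((sigma2 / (1 - rho ^ 2)) * real m ^ 2)
             + (2 * muL ^ 2 / real n ^ 2 + 2 * muL / real n) * (1 - rho ^ n) + 1)"
proof -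
  have "bw M eps D L muD rho sigma2 muL sigmaL2 Lplus n m"
    apply (rule bw.intro[OF P])
    apply (rule bw_axioms.intro)
                        apply (rule assms; assumption?)+
    done
  then show ?thesis by (rule bw.final)
qed

end
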